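(* As a symmetric set-operad, $\mathrm{RW}$ is generated by the three trees $A_\prec$, $A_\mu$, $A_\odot$.
   Context: Red and white trees: $\mathrm{RW}(n)$ is the set of finite rooted trees (children unordered) whose nodes $z$ carry possibly empty label sets $L(z)\subseteq[n]$ partitioning $[n]$, each empty node having at least two children; labelled nodes are white, an empty node is red iff all its children are white. $S_n$ acts by relabelling. Composition $T_1\circ_xT_2$ ($T_1\in\mathrm{RW}(m)$, $T_2\in\mathrm{RW}(n)$): relabel $T_1$ by $y\mapsto y+n-1$ for $y>x$ and $T_2$ by $y\mapsto y+x-1$; $z\ni x$ in $T_1$, $r$ = root of $T_2$. (W) $r$ not red: remove $x$ from $L(z)$, add $L(r)$ to $L(z)$, children of $r$ become children of $z$. (R1) $r$ red, $T_1$ the single node $\{x\}$: result $T_2$. (R2) $r$ red and ($z$ has a child or $|L(z)|\ge2$): remove $x$ from $L(z)$, attach $T_2$ as child subtree of $z$. (R3) $r$ red, $z$ non-root leaf with $L(z)=\{x\}$: delete $z$, children of $r$ become children of the parent of $z$. Colours recomputed. With these compositions and actions $\mathrm{RW}$ is a symmetric set-operad. $A_\mu$ = single node $\{1,2\}$; $A_\prec$ = root $\{1\}$ with child $\{2\}$; $A_\odot$ = empty red root with children $\{1\},\{2\}$. *)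

theory Defs
  imports "HOL-Library.Multiset" "HOL-Combinatorics.Permutations"
begin

text \<open>Red and white trees: finite rooted trees with unordered children (a multiset
  of subtrees); every node carries a (possibly empty) label set.\<close>

datatype rwt = Node "nat set" "rwt multiset"

fun root_lab :: "rwt \<Rightarrow> nat set" where
  "root_lab (Node L C) = L"

fun kids :: "rwt \<Rightarrow> rwt multiset" where
  "kids (Node L C) = C"

primrec labsets :: "rwt \<Rightarrow> nat set multiset" where
  "labsets (Node L C) = {#L#} + \<Sum>\<^sub># (image_mset labsets C)"

primrec empty_ok :: "rwt \<Rightarrow> bool" where
  "empty_ok (Node L C) = ((L = {} \<longrightarrow> size C \<ge> 2) \<and> (\<forall>b\<in>#image_mset empty_ok C. b))"

text \<open>RW(n): the label sets of the nodes partition [n] = {1..n}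
  (each element of [n] lies in exactly one node, no other labels occur),
  and every empty node has at least two children.\<close>
definition RW :: "nat \<Rightarrow> rwt set" where
  "RW n = {T. (\<forall>y\<in>{1..n}. size (filter_mset (\<lambda>L. y \<in> L) (labsets T)) = 1)
             \<and> (\<forall>L\<in>#labsets T. L \<subseteq> {1..n}) \<and> empty_ok T}"

text \<open>White = labelled; an empty node is red iff all its children are white.\<close>
definition red :: "rwt \<Rightarrow> bool" where
  "red t \<longleftrightarrow> root_lab t = {} \<and> (\<forall>c\<in>#kids t. root_lab c \<noteq> {})"

primrec relabel :: "(nat \<Rightarrow> nat) \<Rightarrow> rwt \<Rightarrow> rwt" where
  "relabel f (Node L C) = Node (f ` L) (image_mset (relabel f) C)"

text \<open>Grafting the (already relabelled) tree S at the label x, below the root.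
  The result is the multiset of trees replacing the given subtree among the
  children of its parent (needed for case (R3)).\<close>
primrec repl :: "nat \<Rightarrow> rwt \<Rightarrow> rwt \<Rightarrow> rwt multiset" where
  "repl x S (Node L C) =
     (if x \<in> L then
        (if \<not> red S then {# Node (L - {x} \<union> root_lab S) (C + kids S) #}      \<comment> \<open>(W)\<close>
         else if C \<noteq> {#} \<or> card L \<ge> 2 then {# Node (L - {x}) (C + {#S#}) #}  \<comment> \<open>(R2)\<close>
         else kids S)                                                          \<comment> \<open>(R3)\<close>
      else {# Node L (\<Sum>\<^sub># (image_mset (repl x S) C)) #})"

fun graft_top :: "nat \<Rightarrow> rwt \<Rightarrow> rwt \<Rightarrow> rwt" where
  "graft_top x S (Node L C) =
     (if x \<in> L then
        (if \<not> red S then Node (L - {x} \<union> root_lab S) (C + kids S)       \<comment> \<open>(W)\<close>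
         else if C \<noteq> {#} \<or> card L \<ge> 2 then Node (L - {x}) (C + {#S#})   \<comment> \<open>(R2)\<close>
         else S)                                                           \<comment> \<open>(R1)\<close>
      else Node L (\<Sum>\<^sub># (image_mset (repl x S) C)))"

definition ocomp :: "nat \<Rightarrow> rwt \<Rightarrow> nat \<Rightarrow> rwt \<Rightarrow> rwt" where
  "ocomp n T1 x T2 =
     graft_top x (relabel (\<lambda>y. y + x - 1) T2)
                 (relabel (\<lambda>y. if y > x then y + n - 1 else y) T1)"

definition A_mu :: rwt where "A_mu = Node {1,2} {#}"
definition A_prec :: rwt where "A_prec = Node {1} {# Node {2} {#} #}"
definition A_odot :: rwt where "A_odot = Node {} {# Node {1} {#}, Node {2} {#} #}"

inductive_set generated :: "(nat \<times> rwt) set \<Rightarrow> (nat \<times> rwt) set" for G where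
  gen: "g \<in> G \<Longrightarrow> g \<in> generated G"
| unit: "(1, Node {1} {#}) \<in> generated G"
| comp: "(m, T1) \<in> generated G \<Longrightarrow> (n, T2) \<in> generated G \<Longrightarrow> 1 \<le> x \<Longrightarrow> x \<le> m
          \<Longrightarrow> (m + n - 1, ocomp n T1 x T2) \<in> generated G"
| act: "(n, T) \<in> generated G \<Longrightarrow> \<sigma> permutes {1..n}
          \<Longrightarrow> (n, relabel \<sigma> T) \<in> generated G"

end

theory Submission
  imports Defs
begin


primrec labs :: "rwt \<Rightarrow> nat set" where
  "labs (Node L C) = L \<union> \<Union> (set_mset (image_mset labs C))"

primrec cnt :: "nat \<Rightarrow> rwt \<Rightarrow> nat" where
  "cnt y (Node L C) = (if y \<in> L then 1 else 0) + sum_mset (image_mset (cnt y) C)"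

primrec wt :: "rwt \<Rightarrow> nat" where
  "wt (Node L C) = 1 + card L + sum_mset (image_mset wt C)"

definition wfT :: "rwt \<Rightarrow> bool" where
  "wfT T \<longleftrightarrow> empty_ok T \<and> (\<forall>y. cnt y T \<le> 1) \<and> finite (labs T)"

lemma image_mset_sum_mset_gen:
  "image_mset f (sum_mset M) = sum_mset (image_mset (image_mset f) M)"
  by (induction M) auto

lemma filter_sum_mset_gen:
  "size (filter_mset P (sum_mset M)) = sum_mset (image_mset (\<lambda>A. size (filter_mset P A)) M)"
  by (induction M) auto

lemma cnt_labsets: "cnt y T = size (filter_mset (\<lambda>L. y \<in> L) (labsets T))"
proof (induction T)
  case (Node L C)
  have "image_mset (cnt y) C = image_mset (\<lambda>c. size (filter_mset (\<lambda>L. y \<in> L) (labsets c))) C"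
    using Node by (intro image_mset_cong) auto
  then show ?case by (simp add: filter_sum_mset_gen multiset.map_comp comp_def)
qed

lemma sum_pos_iff: "(0::nat) < sum_mset (image_mset f M) \<longleftrightarrow> (\<exists>c\<in>#M. 0 < f c)"
proof (induction M)
  case (add x M)
  then show ?case by simp
qed simp

lemma labs_cnt: "y \<in> labs T \<longleftrightarrow> 0 < cnt y T"
proof (induction T)
  case (Node L C)
  have "(\<exists>c\<in>#C. y \<in> labs c) \<longleftrightarrow> (\<exists>c\<in>#C. 0 < cnt y c)" using Node by blast
  then show ?case by (simp add: sum_pos_iff)
qed

lemma labs_set_mset: "c \<in># C \<Longrightarrow> labs c \<subseteq> labs (Node L C)"
  by auto

lemma sum_ge_elem: "(c::'a) \<in># M \<Longrightarrow> f c \<le> sum_mset (image_mset (f::'a\<Rightarrow>nat) M)"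
proof -
  assume "c \<in># M"
  then obtain M' where "M = add_mset c M'" by (meson multi_member_split)
  then show ?thesis by simp
qed

lemma wfT_child: assumes "wfT (Node L C)" "c \<in># C" shows "wfT c"
proof -
  have e: "empty_ok c" using assms by (auto simp: wfT_def)
  have "cnt y c \<le> 1" for y
  proof -
    have "cnt y c \<le> cnt y (Node L C)" using sum_ge_elem[OF assms(2), of "cnt y"] by simp
    then show ?thesis using assms(1) unfolding wfT_def by (metis le_trans)
  qed
  moreover have "finite (labs c)" using assms unfolding wfT_def by (meson finite_subset labs_set_mset)
  ultimately show ?thesis using e by (simp add: wfT_def)
qed

lemma labs_nonempty: "empty_ok T \<Longrightarrow> labs T \<noteq> {}"
proof (induction T)
  case (Node L C)
  show ?case
  proof (cases "L = {}")
    case True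
    then have "size C \<ge> 2" using Node.prems by simp
    then obtain c where "c \<in># C" by (metis multiset_nonemptyE size_empty not_numeral_le_zero)
    then show ?thesis using Node by auto
  qed auto
qed

lemma wt_pos: "1 \<le> wt T" by (cases T) auto

lemma sum_ge_size: "(\<forall>c\<in>#M. k \<le> f c) \<Longrightarrow> k * size M \<le> sum_mset (image_mset f M)"
  by (induction M) (auto simp: add_mono)

lemma wt_wfT: "wfT T \<Longrightarrow> 2 \<le> wt T"
proof (cases T)
  case (Node L C)
  assume w: "wfT T"
  show ?thesis
  proof (cases "L = {}")
    case True
    then have "size C \<ge> 2" using w Node by (simp add: wfT_def)
    moreover have "1 * size C \<le> sum_mset (image_mset wt C)" using wt_pos by (intro sum_ge_size) auto
    ultimately show ?thesis using Node by simp
  next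
    case False
    have "finite L" using w Node by (simp add: wfT_def)
    then have "card L \<ge> 1" using False by (simp add: Suc_le_eq card_gt_0_iff)
    then show ?thesis using Node by simp
  qed
qed

lemma relabel_comp: "relabel g (relabel f T) = relabel (g \<circ> f) T"
proof (induction T)
  case (Node L C)
  have "image_mset (relabel g) (image_mset (relabel f) C) = image_mset (relabel (g \<circ> f)) C"
    unfolding multiset.map_comp by (rule image_mset_cong) (simp add: Node comp_def)
  then show ?case by (simp add: image_comp comp_def)
qed

lemma relabel_cong: "(\<forall>y\<in>labs T. f y = g y) \<Longrightarrow> relabel f T = relabel g T"
proof (induction T)
  case (Node L C)
  have "image_mset (relabel f) C = image_mset (relabel g) C"
  proof (rule image_mset_cong)
    fix c assume "c \<in># C"
    then show "relabel f c = relabel g c" using Node by (meson labs_set_mset subsetD)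
  qed
  moreover have "f ` L = g ` L" using Node.prems by auto
  ultimately show ?case by simp
qed

lemma relabel_id: "relabel id T = T"
proof (induction T)
  case (Node L C)
  have "image_mset (relabel id) C = image_mset id C"
    by (rule image_mset_cong) (simp add: Node)
  then show ?case by (simp add: id_def)
qed

lemma labs_relabel: "labs (relabel f T) = f ` labs T"
proof (induction T)
  case (Node L C)
  have "\<Union> (set_mset (image_mset labs (image_mset (relabel f) C))) = f ` \<Union> (set_mset (image_mset labs C))"
    using Node by (auto simp: image_Union image_image)
  then show ?case by (simp add: image_Un)
qed

lemma root_lab_relabel: "root_lab (relabel f t) = f ` root_lab t" by (cases t) auto
lemma kids_relabel: "kids (relabel f t) = image_mset (relabel f) (kids t)" by (cases t) auto

lemma red_relabel: "red (relabel f t) = red t"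
  unfolding red_def by (auto simp: root_lab_relabel kids_relabel)



abbreviation G0 where "G0 \<equiv> {(2, A_prec), (2, A_mu), (2, A_odot)}"

lemma sum_singletons: "sum_mset (image_mset (\<lambda>c. {#c#}) C) = C"
  by (induction C) auto

lemma repl_id: "x \<notin> labs T \<Longrightarrow> repl x S T = {#T#}"
proof (induction T)
  case (Node L C)
  have "image_mset (repl x S) C = image_mset (\<lambda>c. {#c#}) C"
    by (rule image_mset_cong) (use Node in auto)
  then show ?case using Node.prems by (simp add: sum_singletons)
qed

lemma inj_facts:
  assumes "inj_on H (insert x L)"
  shows "(H x \<in> H ` L) = (x \<in> L)" "H ` L - {H x} = H ` (L - {x})" "card (H ` L) = card L"
proof -
  show "(H x \<in> H ` L) = (x \<in> L)" using assms by (auto simp: inj_on_def)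
  show "H ` L - {H x} = H ` (L - {x})" using assms by (auto simp: inj_on_def)
  show "card (H ` L) = card L" using assms by (meson card_image inj_on_subset subset_insertI)
qed

lemma repl_relabel:
  "inj_on H (insert x (labs T)) \<Longrightarrow>
   repl (H x) (relabel H S) (relabel H T) = image_mset (relabel H) (repl x S T)"
proof (induction T)
  case (Node L C)
  have inj: "inj_on H (insert x L)" using Node.prems by (rule inj_on_subset) auto
  note f = inj_facts[OF inj]
  show ?case
  proof (cases "x \<in> L")
    case True
    show ?thesis
      using True f by (auto simp: red_relabel root_lab_relabel kids_relabel image_Un)
  next
    case False
    have "image_mset (relabel H) (sum_mset (image_mset (repl x S) C))
        = sum_mset (image_mset (\<lambda>c. image_mset (relabel H) (repl x S c)) C)"
      by (simp add: image_mset_sum_mset_gen multiset.map_comp comp_def)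
    also have "\<dots> = sum_mset (image_mset (\<lambda>c. repl (H x) (relabel H S) (relabel H c)) C)"
    proof -
      have "image_mset (\<lambda>c. image_mset (relabel H) (repl x S c)) C
          = image_mset (\<lambda>c. repl (H x) (relabel H S) (relabel H c)) C"
      proof (rule image_mset_cong)
        fix c assume c: "c \<in># C"
        have "inj_on H (insert x (labs c))"
          using Node.prems c by (auto intro: inj_on_subset)
        then show "image_mset (relabel H) (repl x S c) = repl (H x) (relabel H S) (relabel H c)"
          using Node.IH[OF c] by simp
      qed
      then show ?thesis by simp
    qed
    finally have e: "image_mset (relabel H) (sum_mset (image_mset (repl x S) C))
       = sum_mset (image_mset (repl (H x) (relabel H S)) (image_mset (relabel H) C))"
      by (simp add: multiset.map_comp comp_def)
    show ?thesis using False f e by simp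
  qed
qed

lemma graft_relabel:
  assumes "inj_on H (insert x (labs T))"
  shows "graft_top (H x) (relabel H S) (relabel H T) = relabel H (graft_top x S T)"
proof (cases T)
  case (Node L C)
  have inj: "inj_on H (insert x L)" using assms Node by (auto intro: inj_on_subset)
  note f = inj_facts[OF inj]
  show ?thesis
  proof (cases "x \<in> L")
    case True
    show ?thesis
      using True f Node by (auto simp: red_relabel root_lab_relabel kids_relabel image_Un)
  next
    case False
    have "image_mset (relabel H) (sum_mset (image_mset (repl x S) C))
        = sum_mset (image_mset (\<lambda>c. image_mset (relabel H) (repl x S c)) C)"
      by (simp add: image_mset_sum_mset_gen multiset.map_comp comp_def)
    also have "\<dots> = sum_mset (image_mset (\<lambda>c. repl (H x) (relabel H S) (relabel H c)) C)"
    proof -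
      have "image_mset (\<lambda>c. image_mset (relabel H) (repl x S c)) C
          = image_mset (\<lambda>c. repl (H x) (relabel H S) (relabel H c)) C"
      proof (rule image_mset_cong)
        fix c assume c: "c \<in># C"
        have "inj_on H (insert x (labs c))"
          using assms Node c by (auto intro: inj_on_subset)
        then show "image_mset (relabel H) (repl x S c) = repl (H x) (relabel H S) (relabel H c)"
          using repl_relabel by simp
      qed
      then show ?thesis by simp
    qed
    finally have e: "image_mset (relabel H) (sum_mset (image_mset (repl x S) C))
       = sum_mset (image_mset (repl (H x) (relabel H S)) (image_mset (relabel H) C))"
      by (simp add: multiset.map_comp comp_def)
    show ?thesis using False f e Node by simp
  qed
qed

lemma gen_any:
  assumes g: "(n, relabel f0 T) \<in> generated G"
    and b0: "bij_betw f0 (labs T) {1..n}" and b: "bij_betw f (labs T) {1..n}"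
  shows "(n, relabel f T) \<in> generated G"
proof -
  define g where "g = f \<circ> inv_into (labs T) f0"
  define \<sigma> where "\<sigma> = (\<lambda>y. if y \<in> {1..n} then g y else y)"
  have bg: "bij_betw g {1..n} {1..n}"
    unfolding g_def using bij_betw_trans[OF bij_betw_inv_into[OF b0] b] .
  have "bij_betw \<sigma> {1..n} {1..n}"
    using bg bij_betw_cong[of "{1..n}" \<sigma> g "{1..n}"] by (simp add: \<sigma>_def)
  then have "\<sigma> permutes {1..n}" by (rule bij_imp_permutes) (auto simp: \<sigma>_def)
  then have "(n, relabel \<sigma> (relabel f0 T)) \<in> generated G" by (rule generated.act[OF g])
  moreover have "relabel \<sigma> (relabel f0 T) = relabel f T"
    unfolding relabel_comp
  proof (rule relabel_cong, intro ballI)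
    fix y assume y: "y \<in> labs T"
    have "f0 y \<in> {1..n}" using b0 y by (rule bij_betw_apply)
    moreover have "inv_into (labs T) f0 (f0 y) = y"
      using bij_betw_imp_inj_on[OF b0] y by (rule inv_into_f_f)
    ultimately show "(\<sigma> \<circ> f0) y = f y" by (simp add: \<sigma>_def g_def)
  qed
  ultimately show ?thesis by simp
qed

definition claim :: "rwt \<Rightarrow> bool" where
  "claim T \<longleftrightarrow> (\<exists>f. bij_betw f (labs T) {1..card (labs T)} \<and> (card (labs T), relabel f T) \<in> generated G0)"

lemma claim_any: "claim T \<Longrightarrow> bij_betw f (labs T) {1..card (labs T)} \<Longrightarrow> (card (labs T), relabel f T) \<in> generated G0"
  unfolding claim_def using gen_any by blast

lemma claimI: "bij_betw f (labs T) {1..n} \<Longrightarrow> (n, relabel f T) \<in> generated G0 \<Longrightarrow> claim T"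
  unfolding claim_def using bij_betw_same_card by fastforce



lemma shift_bij: "1 \<le> (m::nat) \<Longrightarrow> bij_betw (\<lambda>y. y + m - 1) {1..k} {m..m + k - 1}"
proof -
  assume m: "1 \<le> m"
  have e: "(\<lambda>y::nat. y + m - 1) = (\<lambda>y. y + (m - 1))" using m by auto
  have "(\<lambda>y. y + (m - 1)) ` {1..k} = {1 + (m - 1)..k + (m - 1)}"
    using image_add_atLeastAtMost[of "m - 1" 1 k] by (simp add: add.commute)
  moreover have "{1 + (m - 1)..k + (m - 1)} = {m..m + k - 1}" using m by auto
  ultimately show ?thesis unfolding e bij_betw_def by (auto simp: inj_on_def)
qed

lemma step:
  assumes c1: "claim T1" and c2: "claim T2"
    and fin1: "finite (labs T1)" and fin2: "finite (labs T2)"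
    and x: "x \<in> labs T1" and disj: "labs T1 \<inter> labs T2 = {}" and ne: "labs T2 \<noteq> {}"
    and T: "T = graft_top x T2 T1" and lT: "labs T = (labs T1 - {x}) \<union> labs T2"
  shows "claim T"
proof -
  define m where "m = card (labs T1)"
  define k where "k = card (labs T2)"
  have m1: "1 \<le> m" using fin1 x unfolding m_def by (metis card_0_eq empty_iff less_one not_le)
  have k1: "1 \<le> k" using fin2 ne unfolding k_def by (metis card_0_eq less_one not_le)
  obtain g1 where g1: "bij_betw g1 (labs T1) {1..m}"
    using c1 unfolding claim_def m_def by blast
  define f1 where "f1 = Transposition.transpose (g1 x) m \<circ> g1"
  have gx: "g1 x \<in> {1..m}" using g1 x by (rule bij_betw_apply)
  have "Transposition.transpose (g1 x) m permutes {1..m}"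
    using gx m1 by (intro permutes_swap_id) auto
  then have bf1: "bij_betw f1 (labs T1) {1..m}"
    unfolding f1_def using g1 by (meson bij_betw_trans permutes_imp_bij)
  have f1x: "f1 x = m" by (simp add: f1_def)
  have gen1: "(m, relabel f1 T1) \<in> generated G0"
    using claim_any[OF c1] bf1 unfolding m_def by blast
  obtain f2 where bf2: "bij_betw f2 (labs T2) {1..k}"
    using c2 unfolding claim_def k_def by blast
  have gen2: "(k, relabel f2 T2) \<in> generated G0"
    using claim_any[OF c2] bf2 unfolding k_def by blast
  have gen: "(m + k - 1, ocomp k (relabel f1 T1) m (relabel f2 T2)) \<in> generated G0"
    using generated.comp[OF gen1 gen2, of m] m1 by simp
  define H where "H z = (if z \<in> labs T2 then f2 z + m - 1 else f1 z)" for z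
  have H1: "H z = f1 z" if "z \<in> labs T1" for z using that disj unfolding H_def by auto
  have H2: "H z = f2 z + m - 1" if "z \<in> labs T2" for z using that unfolding H_def by auto
  have r2: "relabel (\<lambda>y. y + m - 1) (relabel f2 T2) = relabel H T2"
    unfolding relabel_comp by (rule relabel_cong) (simp add: H2)
  have r1: "relabel (\<lambda>y. if y > m then y + k - 1 else y) (relabel f1 T1) = relabel H T1"
    unfolding relabel_comp
  proof (rule relabel_cong, intro ballI)
    fix y assume y: "y \<in> labs T1"
    have "f1 y \<in> {1..m}" using bf1 y by (rule bij_betw_apply)
    then show "((\<lambda>y. if y > m then y + k - 1 else y) \<circ> f1) y = H y" using H1[OF y] by auto
  qed
  have Hx: "H x = m" using H1[OF x] f1x by simp
  have injH: "inj_on H (insert x (labs T1))"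
  proof -
    have "inj_on H (labs T1) = inj_on f1 (labs T1)" by (rule inj_on_cong) (rule H1)
    then show ?thesis using bij_betw_imp_inj_on[OF bf1] insert_absorb[OF x] by simp
  qed
  have oc: "ocomp k (relabel f1 T1) m (relabel f2 T2) = relabel H T"
  proof -
    have "ocomp k (relabel f1 T1) m (relabel f2 T2) = graft_top m (relabel H T2) (relabel H T1)"
      by (simp only: ocomp_def r1 r2)
    also have "\<dots> = graft_top (H x) (relabel H T2) (relabel H T1)" by (simp only: Hx)
    also have "\<dots> = relabel H T" unfolding T by (rule graft_relabel[OF injH])
    finally show ?thesis .
  qed
  have bA: "bij_betw H (labs T1 - {x}) {1..m - 1}"
  proof -
    have "bij_betw f1 {x} {m}" using f1x by (simp add: bij_betw_def)
    then have "bij_betw f1 (labs T1 - {x}) ({1..m} - {m})"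
      using bij_betw_DiffI[OF bf1] x m1 by auto
    moreover have "{1..m} - {m} = {1..m - 1}" using m1 by auto
    ultimately show ?thesis using bij_betw_cong[of "labs T1 - {x}" H f1] H1 by auto
  qed
  have bB: "bij_betw H (labs T2) {m..m + k - 1}"
  proof -
    have "bij_betw ((\<lambda>y. y + m - 1) \<circ> f2) (labs T2) {m..m + k - 1}"
      using bij_betw_trans[OF bf2 shift_bij[OF m1]] .
    moreover have "bij_betw H (labs T2) {m..m + k - 1} = bij_betw ((\<lambda>y. y + m - 1) \<circ> f2) (labs T2) {m..m + k - 1}"
      by (rule bij_betw_cong) (simp add: H2)
    ultimately show ?thesis by simp
  qed
  have "bij_betw H (labs T) ({1..m - 1} \<union> {m..m + k - 1})"
    unfolding lT by (rule bij_betw_combine[OF bA bB]) auto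
  moreover have "{1..m - 1} \<union> {m..m + k - 1} = {1..m + k - 1}" using m1 k1 by auto
  ultimately have bH: "bij_betw H (labs T) {1..m + k - 1}" by simp
  show ?thesis using claimI[OF bH] gen oc by simp
qed

lemma claim_unit: "claim (Node {a} {#})"
proof (rule claimI[where f="\<lambda>_. 1" and n=1])
  show "bij_betw (\<lambda>_. 1::nat) (labs (Node {a} {#})) {1..1}" by (simp add: bij_betw_def)
  show "(1, relabel (\<lambda>_. 1) (Node {a} {#})) \<in> generated G0" using generated.unit by simp
qed

lemma claim_mu: "a \<noteq> b \<Longrightarrow> claim (Node {a, b} {#})"
proof (rule claimI[where f="\<lambda>z. if z = a then 1 else 2" and n=2])
  assume ab: "a \<noteq> b"
  have "{1..2::nat} = {1,2}" by auto
  then show "bij_betw (\<lambda>z. if z = a then 1 else 2::nat) (labs (Node {a, b} {#})) {1..2}"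
    using ab by (auto simp: bij_betw_def inj_on_def)
  have "relabel (\<lambda>z. if z = a then 1 else 2) (Node {a, b} {#}) = A_mu"
    using ab by (auto simp: A_mu_def)
  then show "(2, relabel (\<lambda>z. if z = a then 1 else 2) (Node {a, b} {#})) \<in> generated G0"
    by (simp add: generated.gen)
qed

lemma claim_prec: "a \<noteq> b \<Longrightarrow> claim (Node {a} {#Node {b} {#}#})"
proof (rule claimI[where f="\<lambda>z. if z = a then 1 else 2" and n=2])
  assume ab: "a \<noteq> b"
  have "{1..2::nat} = {1,2}" by auto
  then show "bij_betw (\<lambda>z. if z = a then 1 else 2::nat) (labs (Node {a} {#Node {b} {#}#})) {1..2}"
    using ab by (auto simp: bij_betw_def inj_on_def)
  have "relabel (\<lambda>z. if z = a then 1 else 2) (Node {a} {#Node {b} {#}#}) = A_prec"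
    using ab by (auto simp: A_prec_def)
  then show "(2, relabel (\<lambda>z. if z = a then 1 else 2) (Node {a} {#Node {b} {#}#})) \<in> generated G0"
    by (simp add: generated.gen)
qed

lemma claim_odot: "a \<noteq> b \<Longrightarrow> claim (Node {} {#Node {a} {#}, Node {b} {#}#})"
proof (rule claimI[where f="\<lambda>z. if z = a then 1 else 2" and n=2])
  assume ab: "a \<noteq> b"
  have "{1..2::nat} = {1,2}" by auto
  then show "bij_betw (\<lambda>z. if z = a then 1 else 2::nat) (labs (Node {} {#Node {a} {#}, Node {b} {#}#})) {1..2}"
    using ab by (auto simp: bij_betw_def inj_on_def)
  have "relabel (\<lambda>z. if z = a then 1 else 2) (Node {} {#Node {a} {#}, Node {b} {#}#}) = A_odot"
    using ab by (auto simp: A_odot_def add_mset_commute)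
  then show "(2, relabel (\<lambda>z. if z = a then 1 else 2) (Node {} {#Node {a} {#}, Node {b} {#}#})) \<in> generated G0"
    by (simp add: generated.gen)
qed



lemma wfT_mk:
  assumes "finite L" "L = {} \<longrightarrow> 2 \<le> size C" "\<forall>c\<in>#C. wfT c" "\<forall>y. cnt y (Node L C) \<le> 1"
  shows "wfT (Node L C)"
proof -
  have "empty_ok (Node L C)" using assms(2,3) by (auto simp: wfT_def)
  moreover have "finite (labs (Node L C))" using assms(1,3) by (auto simp: wfT_def)
  ultimately show ?thesis using assms(4) by (simp add: wfT_def)
qed

lemma wfT_D:
  assumes "wfT (Node L C)"
  shows "finite L" "L = {} \<Longrightarrow> 2 \<le> size C" "\<And>c. c \<in># C \<Longrightarrow> wfT c" "cnt y (Node L C) \<le> 1"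
    "finite (labs (Node L C))"
  using assms wfT_child by (auto simp: wfT_def)

lemma cnt_zero: "x \<notin> labs T \<Longrightarrow> cnt x T = 0"
  using labs_cnt by auto

lemma disj_root:
  assumes "\<forall>y. cnt y (Node L C) \<le> 1" "c \<in># C" shows "L \<inter> labs c = {}"
proof (rule ccontr)
  assume "L \<inter> labs c \<noteq> {}"
  then obtain y where y: "y \<in> L" "y \<in> labs c" by blast
  have "1 \<le> cnt y c" using y(2) labs_cnt by (metis One_nat_def Suc_leI)
  moreover have "cnt y c \<le> sum_mset (image_mset (cnt y) C)" using sum_ge_elem[OF assms(2)] .
  ultimately have "2 \<le> cnt y (Node L C)" using y(1) by simp
  then show False using assms(1)[rule_format, of y] by linarith
qed

lemma disj_kids:
  assumes "\<forall>y. cnt y (Node L (add_mset c C)) \<le> 1" "c' \<in># C" shows "labs c \<inter> labs c' = {}"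
proof (rule ccontr)
  assume "labs c \<inter> labs c' \<noteq> {}"
  then obtain y where y: "y \<in> labs c" "y \<in> labs c'" by blast
  have "1 \<le> cnt y c" using y(1) labs_cnt by (metis One_nat_def Suc_leI)
  moreover have "1 \<le> cnt y c'" using y(2) labs_cnt by (metis One_nat_def Suc_leI)
  moreover have "cnt y c' \<le> sum_mset (image_mset (cnt y) C)" using sum_ge_elem[OF assms(2)] .
  ultimately have "2 \<le> cnt y (Node L (add_mset c C))" by simp
  then show False using assms(1)[rule_format, of y] by linarith
qed

lemma labs_Node: "labs (Node L C) = L \<union> (\<Union>c\<in>set_mset C. labs c)" by simp

lemma caseA:
  assumes IH: "\<And>S. wt S < wt (Node L C) \<Longrightarrow> wfT S \<Longrightarrow> claim S"
    and w: "wfT (Node L C)" and x: "x \<notin> labs (Node L C)" and cL: "2 \<le> card L"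
  shows "claim (Node L C)"
proof -
  note D = wfT_D[OF w]
  have cn: "\<forall>y. cnt y (Node L C) \<le> 1" using D(4) by blast
  obtain a where a: "a \<in> L" using cL by (metis all_not_in_conv card.empty not_numeral_le_zero)
  have ax: "a \<noteq> x" using a x by auto
  define T2 where "T2 = Node (L - {a}) C"
  have ne2: "L - {a} \<noteq> {}"
  proof
    assume "L - {a} = {}"
    then have "L = {a}" using a by auto
    then show False using cL by simp
  qed
  have c1: "claim (Node {a, x} {#})" using claim_mu[OF ax] .
  have w2: "wfT T2" unfolding T2_def
  proof (rule wfT_mk)
    show "finite (L - {a})" using D(1) by simp
    show "L - {a} = {} \<longrightarrow> 2 \<le> size C" using ne2 by simp
    show "\<forall>c\<in>#C. wfT c" using D(3) by blast
    show "\<forall>y. cnt y (Node (L - {a}) C) \<le> 1"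
    proof
      fix y show "cnt y (Node (L - {a}) C) \<le> 1" using cn[rule_format, of y] by (auto split: if_splits)
    qed
  qed
  have wt2: "wt T2 < wt (Node L C)"
    unfolding T2_def using a D(1) cL by (simp add: card_Diff_singleton)
  have c2: "claim T2" using IH[OF wt2 w2] .
  have dja: "a \<notin> labs c" if "c \<in># C" for c using disj_root[OF cn that] a by blast
  show ?thesis
  proof (rule step[OF c1 c2])
    show "finite (labs (Node {a, x} {#}))" by simp
    show "finite (labs T2)" using w2 by (simp add: wfT_def)
    show "x \<in> labs (Node {a, x} {#})" by simp
    show "labs (Node {a, x} {#}) \<inter> labs T2 = {}" using dja x unfolding T2_def by auto
    show "labs T2 \<noteq> {}" using ne2 unfolding T2_def by auto
    have "\<not> red T2" unfolding T2_def red_def using ne2 by simp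
    moreover have "{a, x} - {x} \<union> (L - {a}) = L" using a ax by auto
    ultimately show "Node L C = graft_top x T2 (Node {a, x} {#})" unfolding T2_def by simp
    show "labs (Node L C) = labs (Node {a, x} {#}) - {x} \<union> labs T2" using a ax x unfolding T2_def by auto
  qed
qed

lemma caseB:
  assumes IH: "\<And>S. wt S < wt (Node L C) \<Longrightarrow> wfT S \<Longrightarrow> claim S"
    and w: "wfT (Node L C)" and x: "x \<notin> labs (Node L C)" and c: "c \<in># C" and rc: "red c"
  shows "claim (Node L C)"
proof -
  note D = wfT_D[OF w]
  have cn: "\<forall>y. cnt y (Node L C) \<le> 1" using D(4) by blast
  obtain C' where C: "C = add_mset c C'" using c by (meson multi_member_split)
  have wc: "wfT c" using D(3) c by blast
  define T1 where "T1 = Node (insert x L) C'"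
  have xL: "x \<notin> L" using x by auto
  have cx: "cnt x (Node L C) = 0" using cnt_zero[OF x] .
  have w1: "wfT T1" unfolding T1_def
  proof (rule wfT_mk)
    show "finite (insert x L)" using D(1) by simp
    show "insert x L = {} \<longrightarrow> 2 \<le> size C'" by simp
    show "\<forall>c\<in>#C'. wfT c" using D(3) C by auto
    show "\<forall>y. cnt y (Node (insert x L) C') \<le> 1"
    proof
      fix y
      show "cnt y (Node (insert x L) C') \<le> 1"
      proof (cases "y = x")
        case True then show ?thesis using cx xL C by simp
      next
        case False then show ?thesis using cn[rule_format, of y] C by (auto split: if_splits)
      qed
    qed
  qed
  have wtc: "2 \<le> wt c" using wt_wfT[OF wc] .
  have wt1: "wt T1 < wt (Node L C)" unfolding T1_def using C D(1) xL wtc by simp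
  have wt2: "wt c < wt (Node L C)" using C by simp
  have c1: "claim T1" using IH[OF wt1 w1] .
  have c2: "claim c" using IH[OF wt2 wc] .
  have cn': "\<forall>y. cnt y (Node L (add_mset c C')) \<le> 1" using cn C by simp
  show ?thesis
  proof (rule step[OF c1 c2])
    show "finite (labs T1)" using w1 by (simp add: wfT_def)
    show "finite (labs c)" using wc by (simp add: wfT_def)
    show "x \<in> labs T1" unfolding T1_def by simp
    have "L \<inter> labs c = {}" using disj_root[OF cn c] .
    moreover have "labs c \<inter> labs c' = {}" if "c' \<in># C'" for c' using disj_kids[OF cn' that] .
    moreover have "x \<notin> labs c" using x c by auto
    ultimately show "labs T1 \<inter> labs c = {}" unfolding T1_def by auto
    show "labs c \<noteq> {}" using labs_nonempty wc by (simp add: wfT_def)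
    have cond: "C' \<noteq> {#} \<or> 2 \<le> card (insert x L)"
    proof (cases "L = {}")
      case True
      then have "2 \<le> size C" using D(2) by simp
      then show ?thesis using C by auto
    next
      case False
      then have "1 \<le> card L" using D(1) by (simp add: Suc_le_eq card_gt_0_iff)
      then show ?thesis using D(1) xL by simp
    qed
    have "insert x L - {x} = L" using xL by simp
    then show "Node L C = graft_top x c T1" unfolding T1_def using rc cond C by simp
    show "labs (Node L C) = labs T1 - {x} \<union> labs c" unfolding T1_def using x C by auto
  qed
qed

lemma wfT_leaf: "wfT (Node {b} {#})"
  by (rule wfT_mk) auto

lemma repl_leaf_nonred: "\<not> red c \<Longrightarrow> repl x c (Node {x} {#}) = {#c#}"
  by (cases c) simp

lemma caseC:
  assumes IH: "\<And>S. wt S < wt (Node L C) \<Longrightarrow> wfT S \<Longrightarrow> claim S"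
    and w: "wfT (Node L C)" and x: "x \<notin> labs (Node L C)" and c: "c \<in># C" and rc: "\<not> red c"
    and wtc: "3 \<le> wt c"
  shows "claim (Node L C)"
proof -
  note D = wfT_D[OF w]
  have cn: "\<forall>y. cnt y (Node L C) \<le> 1" using D(4) by blast
  obtain C' where C: "C = add_mset c C'" using c by (meson multi_member_split)
  have wc: "wfT c" using D(3) c by blast
  define T1 where "T1 = Node L (add_mset (Node {x} {#}) C')"
  have xL: "x \<notin> L" using x by auto
  have cx: "cnt x (Node L C) = 0" using cnt_zero[OF x] .
  have w1: "wfT T1" unfolding T1_def
  proof (rule wfT_mk)
    show "finite L" using D(1) by simp
    show "L = {} \<longrightarrow> 2 \<le> size (add_mset (Node {x} {#}) C')" using D(2) C by simp
    show "\<forall>c\<in>#add_mset (Node {x} {#}) C'. wfT c" using D(3) C wfT_leaf by auto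
    show "\<forall>y. cnt y (Node L (add_mset (Node {x} {#}) C')) \<le> 1"
    proof
      fix y
      show "cnt y (Node L (add_mset (Node {x} {#}) C')) \<le> 1"
      proof (cases "y = x")
        case True then show ?thesis using cx xL C by simp
      next
        case False then show ?thesis using cn[rule_format, of y] C by (auto split: if_splits)
      qed
    qed
  qed
  have wt1: "wt T1 < wt (Node L C)" unfolding T1_def using C wtc by simp
  have wt2: "wt c < wt (Node L C)" using C by simp
  have c1: "claim T1" using IH[OF wt1 w1] .
  have c2: "claim c" using IH[OF wt2 wc] .
  have cn': "\<forall>y. cnt y (Node L (add_mset c C')) \<le> 1" using cn C by simp
  show ?thesis
  proof (rule step[OF c1 c2])
    show "finite (labs T1)" using w1 by (simp add: wfT_def)
    show "finite (labs c)" using wc by (simp add: wfT_def)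
    show "x \<in> labs T1" unfolding T1_def by simp
    have "L \<inter> labs c = {}" using disj_root[OF cn c] .
    moreover have "labs c \<inter> labs c' = {}" if "c' \<in># C'" for c' using disj_kids[OF cn' that] .
    moreover have "x \<notin> labs c" using x c by auto
    ultimately show "labs T1 \<inter> labs c = {}" unfolding T1_def by auto
    show "labs c \<noteq> {}" using labs_nonempty wc by (simp add: wfT_def)
    have "image_mset (repl x c) C' = image_mset (\<lambda>t. {#t#}) C'"
    proof (rule image_mset_cong)
      fix t assume "t \<in># C'"
      then have "x \<notin> labs t" using x C by auto
      then show "repl x c t = {#t#}" by (rule repl_id)
    qed
    then have "sum_mset (image_mset (repl x c) C') = C'" by (simp add: sum_singletons)
    then show "Node L C = graft_top x c T1" unfolding T1_def using xL C repl_leaf_nonred[OF rc] by simp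
    show "labs (Node L C) = labs T1 - {x} \<union> labs c" unfolding T1_def using x C by auto
  qed
qed

lemma leaf_of_wt:
  assumes w: "wfT c" and wt: "wt c \<le> 2" shows "\<exists>b. c = Node {b} {#}"
proof (cases c)
  case (Node Lc Cc)
  note D = wfT_D[OF w[unfolded Node]]
  have Cc: "Cc = {#}"
  proof (rule ccontr)
    assume "Cc \<noteq> {#}"
    then obtain d where d: "d \<in># Cc" by blast
    have "2 \<le> wt d" using wt_wfT D(3)[OF d] by blast
    moreover have "wt d \<le> sum_mset (image_mset wt Cc)" using sum_ge_elem[OF d] .
    ultimately show False using wt Node by simp
  qed
  have "Lc \<noteq> {}" using D(2) Cc by auto
  then have "1 \<le> card Lc" using D(1) by (simp add: Suc_le_eq card_gt_0_iff)
  moreover have "card Lc \<le> 1" using wt Node Cc by simp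
  ultimately have "card Lc = 1" by simp
  then obtain b where "Lc = {b}" by (rule card_1_singletonE)
  then show ?thesis using Node Cc by simp
qed

lemma caseD1:
  assumes IH: "\<And>S. wt S < wt (Node {a} C) \<Longrightarrow> wfT S \<Longrightarrow> claim S"
    and w: "wfT (Node {a} C)" and x: "x \<notin> labs (Node {a} C)"
    and lv: "\<forall>c\<in>#C. \<exists>b. c = Node {b} {#}"
  shows "claim (Node {a} C)"
proof -
  note D = wfT_D[OF w]
  have cn: "\<forall>y. cnt y (Node {a} C) \<le> 1" using D(4) by blast
  show ?thesis
  proof (cases "C = {#}")
    case True then show ?thesis using claim_unit by simp
  next
    case False
    then obtain c C' where C: "C = add_mset c C'" by (metis multiset_cases)
    obtain b where b: "c = Node {b} {#}" using lv C by auto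
    have ab: "a \<noteq> b" using disj_root[OF cn, of c] C b by auto
    show ?thesis
    proof (cases "C' = {#}")
      case True then show ?thesis using C b claim_prec[OF ab] by simp
    next
      case False
      define T1 where "T1 = Node {x} C'"
      define T2 where "T2 = Node {a} {#c#}"
      have cx: "cnt x (Node {a} C) = 0" using cnt_zero[OF x] .
      have w1: "wfT T1" unfolding T1_def
      proof (rule wfT_mk)
        show "\<forall>c\<in>#C'. wfT c" using D(3) C by auto
        show "\<forall>y. cnt y (Node {x} C') \<le> 1"
        proof
          fix y
          show "cnt y (Node {x} C') \<le> 1"
          proof (cases "y = x")
            case True then show ?thesis using cx C by simp
          next
            case False then show ?thesis using cn[rule_format, of y] C by (auto split: if_splits)
          qed
        qed
      qed auto
      have wt1: "wt T1 < wt (Node {a} C)" unfolding T1_def using C b by simp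
      have c1: "claim T1" using IH[OF wt1 w1] .
      have c2: "claim T2" unfolding T2_def b using claim_prec[OF ab] .
      have cn': "\<forall>y. cnt y (Node {a} (add_mset c C')) \<le> 1" using cn C by simp
      show ?thesis
      proof (rule step[OF c1 c2])
        show "finite (labs T1)" using w1 by (simp add: wfT_def)
        show "finite (labs T2)" unfolding T2_def b by simp
        show "x \<in> labs T1" unfolding T1_def by simp
        have "{a} \<inter> labs c' = {}" if "c' \<in># C'" for c' using disj_root[OF cn, of c'] that C by auto
        moreover have "labs c \<inter> labs c' = {}" if "c' \<in># C'" for c' using disj_kids[OF cn' that] .
        moreover have "x \<noteq> a" "x \<noteq> b" using x C b by auto
        ultimately show "labs T1 \<inter> labs T2 = {}" unfolding T1_def T2_def b by auto
        show "labs T2 \<noteq> {}" unfolding T2_def by simp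
        have "\<not> red T2" unfolding T2_def red_def by simp
        then show "Node {a} C = graft_top x T2 T1" unfolding T1_def T2_def using C by simp
        show "labs (Node {a} C) = labs T1 - {x} \<union> labs T2" unfolding T1_def T2_def using x C by auto
      qed
    qed
  qed
qed

lemma caseD2:
  assumes IH: "\<And>S. wt S < wt (Node {} C) \<Longrightarrow> wfT S \<Longrightarrow> claim S"
    and w: "wfT (Node {} C)" and x: "x \<notin> labs (Node {} C)"
    and lv: "\<forall>c\<in>#C. \<exists>b. c = Node {b} {#}"
  shows "claim (Node {} C)"
proof -
  note D = wfT_D[OF w]
  have cn: "\<forall>y. cnt y (Node {} C) \<le> 1" using D(4) by blast
  have sz: "2 \<le> size C" using D(2) by simp
  obtain c c' C'' where C: "C = add_mset c (add_mset c' C'')"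
  proof -
    have "C \<noteq> {#}" using sz by auto
    then obtain c C1 where C1: "C = add_mset c C1" by (metis multiset_cases)
    then have "C1 \<noteq> {#}" using sz by auto
    then obtain c' C'' where "C1 = add_mset c' C''" by (metis multiset_cases)
    then show ?thesis using that C1 by blast
  qed
  obtain a where a: "c = Node {a} {#}" using lv C by auto
  obtain b where b: "c' = Node {b} {#}" using lv C by auto
  have cn1: "\<forall>y. cnt y (Node {} (add_mset c (add_mset c' C''))) \<le> 1" using cn C by simp
  have cn2: "\<forall>y. cnt y (Node {} (add_mset c' (add_mset c C''))) \<le> 1" using cn C by (simp add: add_mset_commute)
  have ab: "a \<noteq> b" using disj_kids[OF cn1, of c'] a b by auto
  show ?thesis
  proof (cases "C'' = {#}")
    case True then show ?thesis using C a b claim_odot[OF ab] by simp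
  next
    case False
    define T1 where "T1 = Node {} (add_mset (Node {x} {#}) C'')"
    define T2 where "T2 = Node {} {#c, c'#}"
    have cx: "cnt x (Node {} C) = 0" using cnt_zero[OF x] .
    have w1: "wfT T1" unfolding T1_def
    proof (rule wfT_mk)
      show "{} = {} \<longrightarrow> 2 \<le> size (add_mset (Node {x} {#}) C'')" using False by (simp add: Suc_le_eq nonempty_has_size)
      show "\<forall>c\<in>#add_mset (Node {x} {#}) C''. wfT c" using D(3) C wfT_leaf by auto
      show "\<forall>y. cnt y (Node {} (add_mset (Node {x} {#}) C'')) \<le> 1"
      proof
        fix y
        show "cnt y (Node {} (add_mset (Node {x} {#}) C'')) \<le> 1"
        proof (cases "y = x")
          case True then show ?thesis using cx C by simp
        next
          case False then show ?thesis using cn[rule_format, of y] C by (auto split: if_splits)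
        qed
      qed
    qed auto
    have wt1: "wt T1 < wt (Node {} C)" unfolding T1_def using C a b by simp
    have c1: "claim T1" using IH[OF wt1 w1] .
    have c2: "claim T2" unfolding T2_def a b using claim_odot[OF ab] .
    show ?thesis
    proof (rule step[OF c1 c2])
      show "finite (labs T1)" using w1 by (simp add: wfT_def)
      show "finite (labs T2)" unfolding T2_def a b by simp
      show "x \<in> labs T1" unfolding T1_def by simp
      have "labs c \<inter> labs d = {}" if "d \<in># C''" for d using disj_kids[OF cn1, of d] that by simp
      moreover have "labs c' \<inter> labs d = {}" if "d \<in># C''" for d using disj_kids[OF cn2, of d] that by simp
      moreover have "x \<noteq> a" "x \<noteq> b" using x C a b by auto
      ultimately show "labs T1 \<inter> labs T2 = {}" unfolding T1_def T2_def a b by auto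
      show "labs T2 \<noteq> {}" unfolding T2_def a by simp
      have r: "red T2" unfolding T2_def red_def a b by simp
      have "repl x T2 (Node {x} {#}) = {#c, c'#}" using r by (simp add: T2_def)
      moreover have "image_mset (repl x T2) C'' = image_mset (\<lambda>t. {#t#}) C''"
      proof (rule image_mset_cong)
        fix t assume "t \<in># C''"
        then have "x \<notin> labs t" using x C by auto
        then show "repl x T2 t = {#t#}" by (rule repl_id)
      qed
      ultimately show "Node {} C = graft_top x T2 T1" unfolding T1_def using C by (simp add: sum_singletons)
      show "labs (Node {} C) = labs T1 - {x} \<union> labs T2" unfolding T1_def T2_def using x C by auto
    qed
  qed
qed



lemma main_claim: "wfT T \<Longrightarrow> claim T"
proof (induction T rule: measure_induct_rule[where f=wt])
  case (less T)
  obtain L C where T: "T = Node L C" by (cases T)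
  have w: "wfT (Node L C)" using less.prems T by simp
  have IH: "\<And>S. wt S < wt (Node L C) \<Longrightarrow> wfT S \<Longrightarrow> claim S" using less.IH T by simp
  obtain x where x: "x \<notin> labs (Node L C)"
    using ex_new_if_finite[OF infinite_UNIV_nat wfT_D(5)[OF w]] by blast
  note D = wfT_D[OF w]
  have "claim (Node L C)"
  proof (cases "2 \<le> card L")
    case True then show ?thesis using caseA[OF IH w x] by blast
  next
    case cL: False
    show ?thesis
    proof (cases "\<exists>c\<in>#C. red c")
      case True then show ?thesis using caseB[OF IH w x] by blast
    next
      case nr: False
      show ?thesis
      proof (cases "\<exists>c\<in>#C. \<not> red c \<and> 3 \<le> wt c")
        case True then show ?thesis using caseC[OF IH w x] by blast
      next
        case False
        have lv: "\<forall>c\<in>#C. \<exists>b. c = Node {b} {#}"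
        proof
          fix c assume c: "c \<in># C"
          then have "wt c \<le> 2" using False nr by auto
          then show "\<exists>b. c = Node {b} {#}" using leaf_of_wt D(3)[OF c] by blast
        qed
        have "card L = 0 \<or> card L = 1" using cL by auto
        then show ?thesis
        proof
          assume "card L = 0"
          then have L: "L = {}" using D(1) by simp
          show ?thesis using caseD2[OF IH[unfolded L] w[unfolded L] x[unfolded L] lv] L by simp
        next
          assume "card L = 1"
          then obtain a where L: "L = {a}" by (rule card_1_singletonE)
          show ?thesis using caseD1[OF IH[unfolded L] w[unfolded L] x[unfolded L] lv] L by simp
        qed
      qed
    qed
  qed
  then show ?case using T by simp
qed

lemma filter_pos: "0 < size (filter_mset P M) \<longleftrightarrow> (\<exists>x\<in>#M. P x)"
  by (induction M) auto

theorem mainTheorem15: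
  "\<forall>n. \<forall>T \<in> RW n. (n, T) \<in> generated {(2, A_prec), (2, A_mu), (2, A_odot)}"
proof (intro allI ballI)
  fix n T assume "T \<in> RW n"
  then have h1: "\<forall>y\<in>{1..n}. cnt y T = 1" and h2: "\<forall>L\<in>#labsets T. L \<subseteq> {1..n}"
    and h3: "empty_ok T" unfolding RW_def by (auto simp: cnt_labsets)
  have out: "cnt y T = 0" if "y \<notin> {1..n}" for y
  proof (rule ccontr)
    assume "cnt y T \<noteq> 0"
    then have "0 < size (filter_mset (\<lambda>L. y \<in> L) (labsets T))" by (metis cnt_labsets neq0_conv)
    then obtain L where "L \<in># labsets T" "y \<in> L" using filter_pos[THEN iffD1] by blast
    then show False using h2 that by blast
  qed
  have lT: "labs T = {1..n}"
  proof
    show "labs T \<subseteq> {1..n}" using out labs_cnt by (metis less_irrefl subsetI)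
    show "{1..n} \<subseteq> labs T" using h1 labs_cnt by auto
  qed
  have "wfT T" unfolding wfT_def
  proof (intro conjI allI)
    show "empty_ok T" by (rule h3)
    fix y show "cnt y T \<le> 1" using h1 out by (cases "y \<in> {1..n}") auto
  next
    show "finite (labs T)" using lT by simp
  qed
  then have "claim T" by (rule main_claim)
  moreover have "bij_betw id (labs T) {1..card (labs T)}" using lT by simp
  ultimately have "(card (labs T), relabel id T) \<in> generated G0" by (rule claim_any)
  then show "(n, T) \<in> generated {(2, A_prec), (2, A_mu), (2, A_odot)}" using lT by (simp add: relabel_id)
qed

end
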